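(* Let $\mathscr C$ be an embedded circle pattern for a graph $G$ and an admissible labelling $\alpha:E(G)\to[\alpha_0,\pi)$ with $0<\alpha_0\le\pi/2$, with radius function $r$. Define conductances $\mu([v_0,v_1])=\frac{\sin\alpha([v_0,v_1])}{\cosh(\log r(v_1)-\log r(v_0))-\cos\alpha([v_0,v_1])}$. Then there is a constant $C_5=C_5(\alpha_0)$ such that $\sum_{e=[v,w]}\mu(e)\le C_5$ for all interior vertices $v\in V$, the sum being over all edges incident to $v$.
   Context: $G$ is the graph on the white vertices of a b-quad-graph (a strongly regular cell decomposition into quadrilaterals with bipartite 1-skeleton), adjacent iff incident to a common face. Admissible labelling: at each interior black vertex the labels of incident faces sum to $2\pi$. A circle pattern: circles $\mathscr C(v)$ of radius $r(v)$ such that circles of adjacent vertices intersect with exterior intersection angle $\alpha$ (angle at an intersection point between the radii to the two centers), together with equally oriented kites formed by the two centers and the two intersection points, locally isomorphic to the b-quad-graph at interior vertices; embedded means the kites have disjoint interiors and meet in an edge/vertex iff the corresponding faces do. (The conductance equals the ratio of the distance between the two intersection points to the distance between the two centers.) *)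

theory Defs
  imports "HOL-Analysis.Analysis"
begin

text \<open>A face (quadrilateral) of the b-quad-graph is recorded as the tuple
  (w1, b1, w2, b2) of its vertices in cyclic order (along the orientation of
  the surface): w1, w2 are the white vertices, b1, b2 the black vertices.\<close>

type_synonym face = "nat \<times> nat \<times> nat \<times> nat"

definition fw1 :: "face \<Rightarrow> nat" where "fw1 f = fst f"
definition fb1 :: "face \<Rightarrow> nat" where "fb1 f = fst (snd f)"
definition fw2 :: "face \<Rightarrow> nat" where "fw2 f = fst (snd (snd f))"
definition fb2 :: "face \<Rightarrow> nat" where "fb2 f = snd (snd (snd f))"

definition face_verts :: "face \<Rightarrow> nat set" where
  "face_verts f = {fw1 f, fb1 f, fw2 f, fb2 f}"

definition face_dedges :: "face \<Rightarrow> (nat \<times> nat) set" where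
  "face_dedges f = {(fw1 f, fb1 f), (fb1 f, fw2 f), (fw2 f, fb2 f), (fb2 f, fw1 f)}"

definition face_edges :: "face \<Rightarrow> nat set set" where
  "face_edges f = {{fw1 f, fb1 f}, {fb1 f, fw2 f}, {fw2 f, fb2 f}, {fb2 f, fw1 f}}"

definition white_vertices :: "face set \<Rightarrow> nat set" where
  "white_vertices F = (\<Union>f\<in>F. {fw1 f, fw2 f})"

definition black_vertices :: "face set \<Rightarrow> nat set" where
  "black_vertices F = (\<Union>f\<in>F. {fb1 f, fb2 f})"

definition b_quad_graph :: "face set \<Rightarrow> bool" where
  "b_quad_graph F \<longleftrightarrow>
     F \<noteq> {} \<and>
     \<comment> \<open>quadrilaterals with four distinct vertices\<close>
     (\<forall>f\<in>F. distinct [fw1 f, fb1 f, fw2 f, fb2 f]) \<and>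
     \<comment> \<open>bipartite colouring: no vertex is both white and black\<close>
     white_vertices F \<inter> black_vertices F = {} \<and>
     \<comment> \<open>strong regularity: two distinct faces meet in nothing, a vertex or an edge\<close>
     (\<forall>f\<in>F. \<forall>g\<in>F. f \<noteq> g \<longrightarrow>
        face_verts f \<inter> face_verts g = {} \<or>
        (\<exists>x. face_verts f \<inter> face_verts g = {x}) \<or>
        (\<exists>e\<in>face_edges f \<inter> face_edges g. face_verts f \<inter> face_verts g = e)) \<and>
     \<comment> \<open>surface: each edge lies in at most two faces\<close>
     (\<forall>f\<in>F. \<forall>g\<in>F. \<forall>h\<in>F. \<forall>e. e \<in> face_edges f \<and> e \<in> face_edges g \<and> e \<in> face_edges h
        \<longrightarrow> f = g \<or> g = h \<or> f = h) \<and>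
     \<comment> \<open>coherent orientation: a common edge is traversed oppositely\<close>
     (\<forall>f\<in>F. \<forall>g\<in>F. f \<noteq> g \<longrightarrow> face_dedges f \<inter> face_dedges g = {})"

text \<open>Interior vertex: the faces incident to x form a single closed cycle
  (the link of x is a circle), consecutive faces sharing an edge incident to x.\<close>
definition faces_at :: "face set \<Rightarrow> nat \<Rightarrow> face set" where
  "faces_at F x = {f\<in>F. x \<in> face_verts f}"

definition interior_vertex :: "face set \<Rightarrow> nat \<Rightarrow> bool" where
  "interior_vertex F x \<longleftrightarrow>
     (\<exists>fs. distinct fs \<and> length fs \<ge> 3 \<and> set fs = faces_at F x \<and>
        (\<forall>i<length fs. \<exists>y. {x, y} \<in> face_edges (fs ! i) \<and>
                            {x, y} \<in> face_edges (fs ! ((i + 1) mod length fs))))"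

text \<open>Admissible labelling (labels indexed by faces = edges of G): at each
  interior black vertex the labels of the incident faces sum to 2 pi.\<close>
definition admissible :: "face set \<Rightarrow> (face \<Rightarrow> real) \<Rightarrow> bool" where
  "admissible F \<alpha> \<longleftrightarrow>
     (\<forall>b\<in>black_vertices F. interior_vertex F b \<longrightarrow> (\<Sum>f\<in>faces_at F b. \<alpha> f) = 2 * pi)"

definition angle_at :: "complex \<Rightarrow> complex \<Rightarrow> complex \<Rightarrow> real" where
  "angle_at q a c = arccos (inner (a - q) (c - q) / (norm (a - q) * norm (c - q)))"

text \<open>Positions: z maps white vertices to circle centres and black vertices to
  intersection points. The kite of a face is the union of its two triangles.\<close>
definition kite :: "(nat \<Rightarrow> complex) \<Rightarrow> face \<Rightarrow> complex set" where
  "kite z f = convex hull {z (fw1 f), z (fb1 f), z (fw2 f)}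
              \<union> convex hull {z (fw1 f), z (fb2 f), z (fw2 f)}"

definition cross2 :: "complex \<Rightarrow> complex \<Rightarrow> real" where
  "cross2 a b = Im (cnj a * b)"

definition kite_signed_area :: "(nat \<Rightarrow> complex) \<Rightarrow> face \<Rightarrow> real" where
  "kite_signed_area z f =
     (cross2 (z (fw1 f)) (z (fb1 f)) + cross2 (z (fb1 f)) (z (fw2 f)) +
      cross2 (z (fw2 f)) (z (fb2 f)) + cross2 (z (fb2 f)) (z (fw1 f))) / 2"

text \<open>Circle pattern: circles with centre z v and radius r v for white v;
  for each face (v, b, w, b') the circles of v and w intersect in the two
  distinct points z b, z b' with intersection angle alpha f (angle at an
  intersection point between the radii to the two centres); the kites are
  equally oriented and locally (at interior vertices) the kites of the
  incident faces cover a neighbourhood, as in the b-quad-graph.\<close>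
definition circle_pattern ::
  "face set \<Rightarrow> (face \<Rightarrow> real) \<Rightarrow> (nat \<Rightarrow> real) \<Rightarrow> (nat \<Rightarrow> complex) \<Rightarrow> bool" where
  "circle_pattern F \<alpha> r z \<longleftrightarrow>
     (\<forall>v\<in>white_vertices F. r v > 0) \<and>
     (\<forall>f\<in>F.
        dist (z (fb1 f)) (z (fw1 f)) = r (fw1 f) \<and> dist (z (fb1 f)) (z (fw2 f)) = r (fw2 f) \<and>
        dist (z (fb2 f)) (z (fw1 f)) = r (fw1 f) \<and> dist (z (fb2 f)) (z (fw2 f)) = r (fw2 f) \<and>
        z (fb1 f) \<noteq> z (fb2 f) \<and>
        angle_at (z (fb1 f)) (z (fw1 f)) (z (fw2 f)) = \<alpha> f \<and>
        angle_at (z (fb2 f)) (z (fw1 f)) (z (fw2 f)) = \<alpha> f) \<and>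
     ((\<forall>f\<in>F. kite_signed_area z f > 0) \<or> (\<forall>f\<in>F. kite_signed_area z f < 0)) \<and>
     (\<forall>x. interior_vertex F x \<longrightarrow>
        (\<exists>\<epsilon>>0. ball (z x) \<epsilon> \<subseteq> (\<Union>f\<in>faces_at F x. kite z f)))"

definition embedded :: "face set \<Rightarrow> (nat \<Rightarrow> complex) \<Rightarrow> bool" where
  "embedded F z \<longleftrightarrow>
     (\<forall>f\<in>F. \<forall>g\<in>F. f \<noteq> g \<longrightarrow>
        interior (kite z f) \<inter> interior (kite z g) = {} \<and>
        kite z f \<inter> kite z g = convex hull (z ` (face_verts f \<inter> face_verts g)))"

text \<open>Conductance of the edge [fw1 f, fw2 f] of G corresponding to face f.\<close>
definition conductance :: "(face \<Rightarrow> real) \<Rightarrow> (nat \<Rightarrow> real) \<Rightarrow> face \<Rightarrow> real" where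
  "conductance \<alpha> r f =
     sin (\<alpha> f) / (cosh (ln (r (fw2 f)) - ln (r (fw1 f))) - cos (\<alpha> f))"

end

theory Submission imports Defs begin
lemma cross_inner_id: "(cross2 a c)^2 + (inner a c)^2 = (norm a)^2 * (norm c)^2"
  unfolding cross2_def inner_complex_def
  by (simp only: cmod_power2) (simp add: algebra_simps power2_eq_square)

lemma face_bound:
  fixes v b w :: complex and R S \<alpha> \<alpha>0 \<rho> :: real
  assumes a0: "0 < \<alpha>0" "\<alpha>0 \<le> pi/2"
    and R: "dist b v = R" "R > 0" and S: "dist b w = S" "S > 0"
    and al: "arccos (inner (v - b) (w - b) / (norm (v - b) * norm (w - b))) = \<alpha>"
    and alb: "\<alpha>0 \<le> \<alpha>" "\<alpha> < pi"
  shows "dist v w > 0"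
    "\<bar>cross2 (b - v) (w - v)\<bar> = R * S * sin \<alpha>"
    "sin \<alpha> / (cosh (ln S - ln R) - cos \<alpha>) \<le> 2 * S * sin \<alpha> / (dist v w * sin \<alpha>0)"
proof -
  define a where "a = v - b"
  define c where "c = w - b"
  define k where "k = inner a c"
  have na: "norm a = R" using R by (simp add: a_def dist_norm norm_minus_commute)
  have nc: "norm c = S" using S by (simp add: c_def dist_norm norm_minus_commute)
  have kb: "\<bar>k\<bar> \<le> R * S" using Cauchy_Schwarz_ineq2[of a c] na nc k_def by simp
  have ca: "cos \<alpha> = k / (R * S)"
    using al kb R S unfolding a_def[symmetric] c_def[symmetric] k_def[symmetric] na nc
    by (metis (no_types, lifting) abs_le_iff cos_arccos divide_le_eq_1_pos divide_minus_left
          le_divide_eq_1_pos minus_le_iff mult_pos_pos na nc zero_less_mult_iff)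
  have sa: "sin \<alpha> \<ge> 0" using alb a0 by (intro sin_ge_zero) auto
  have s2: "(sin \<alpha>)^2 = 1 - (k/(R*S))^2" using ca by (simp add: sin_squared_eq)
  have cr2: "(cross2 a c)^2 = (R * S * sin \<alpha>)^2"
  proof -
    have "(cross2 a c)^2 = R^2*S^2 - k^2" using cross_inner_id[of a c] na nc k_def by simp
    also have "\<dots> = (R * S * sin \<alpha>)^2" using s2 R S by (simp add: power_mult_distrib field_simps)
    finally show ?thesis .
  qed
  have crabs: "\<bar>cross2 a c\<bar> = R * S * sin \<alpha>"
    using cr2 sa R S by (metis abs_of_nonneg mult_nonneg_nonneg less_imp_le power2_eq_imp_eq abs_ge_zero power2_abs)
  have crx: "cross2 (b - v) (w - v) = - cross2 a c"
    unfolding a_def c_def cross2_def by (simp add: algebra_simps)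
  show "\<bar>cross2 (b - v) (w - v)\<bar> = R * S * sin \<alpha>" using crx crabs by simp
  define D where "D = dist v w"
  have D2: "D^2 = R^2 + S^2 - 2*R*S*cos \<alpha>"
  proof -
    have "D^2 = (norm (c - a))^2" by (simp add: D_def a_def c_def dist_norm norm_minus_commute)
    also have "\<dots> = R^2 + S^2 - 2*k" using na nc k_def
      by (simp add: power2_norm_eq_inner inner_diff_left inner_diff_right inner_commute) (metis power2_norm_eq_inner add.commute)
    finally show ?thesis using ca R S by simp
  qed
  have sa0: "sin \<alpha>0 > 0" using a0 by (intro sin_gt_zero) auto
  have Dlow: "D^2 \<ge> (R * sin \<alpha>0)^2"
  proof (cases "cos \<alpha> \<le> 0")
    case True
    have "(R * sin \<alpha>0)^2 \<le> R^2" using sin_le_one[of \<alpha>0] sa0 R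
      by (simp add: power_mult_distrib power_le_one)
    also have "\<dots> \<le> D^2" using D2 True R S
      by (smt (verit) mult_nonneg_nonpos mult_pos_pos zero_le_power2)
    finally show ?thesis .
  next
    case False
    have "\<alpha> < pi/2"
    proof (rule ccontr)
      assume "\<not> \<alpha> < pi/2"
      then have "cos \<alpha> \<le> cos (pi/2)" using alb by (intro cos_monotone_0_pi_le) auto
      then show False using False by simp
    qed
    then have "sin \<alpha>0 \<le> sin \<alpha>" using alb a0 by (intro sin_monotone_2pi_le) auto
    then have "(R * sin \<alpha>0)^2 \<le> (R * sin \<alpha>)^2" using sa0 R
      by (intro power_mono) auto
    also have "\<dots> = D^2 - (S - R * cos \<alpha>)^2"
    proof -
      have "(R * sin \<alpha>)^2 = R^2 - R^2 * (cos \<alpha>)^2" by (simp add: power_mult_distrib sin_squared_eq right_diff_distrib)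
      then show ?thesis using D2 by (simp add: power2_diff algebra_simps)
    qed
    also have "\<dots> \<le> D^2" by simp
    finally show ?thesis .
  qed
  have "(R * sin \<alpha>0)^2 > 0" using sa0 R by simp
  then have "D^2 > 0" using Dlow by linarith
  then have Dpos: "D > 0" unfolding D_def using zero_le_dist[of v w]
    by (metis less_eq_real_def power_zero_numeral zero_less_power2)
  then show "dist v w > 0" by (simp add: D_def)
  have DR: "R * sin \<alpha>0 \<le> D" using Dlow Dpos sa0 R
    by (meson less_imp_le power2_le_imp_le)
  have ch: "cosh (ln S - ln R) = (S/R + R/S)/2"
  proof -
    have e1: "exp (ln S - ln R) = S/R" using R S by (simp add: exp_diff)
    have e2: "exp (-(ln S - ln R)) = R/S" using R S by (simp add: exp_diff exp_minus)
    show ?thesis unfolding cosh_def e1 e2 by simp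
  qed
  have den: "cosh (ln S - ln R) - cos \<alpha> = D^2 / (2*R*S)"
    using ch D2 R S by (simp add: field_simps power2_eq_square)
  have "sin \<alpha> / (cosh (ln S - ln R) - cos \<alpha>) = 2*R * S * sin \<alpha> / D^2"
    using den R S Dpos by simp
  also have "\<dots> \<le> 2 * S * sin \<alpha> / (D * sin \<alpha>0)"
  proof -
    have "2*R * S * sin \<alpha> * (D * sin \<alpha>0) \<le> 2 * S * sin \<alpha> * D^2"
    proof -
      have "2*R * S * sin \<alpha> * (D * sin \<alpha>0) = (2 * S * sin \<alpha>*D) * (R * sin \<alpha>0)" by simp
      also have "\<dots> \<le> (2 * S * sin \<alpha>*D) * D" using DR sa S Dpos
        by (intro mult_left_mono) auto
      finally show ?thesis by (simp add: power2_eq_square)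
    qed
    then show ?thesis using Dpos sa0 by (simp add: divide_simps)
  qed
  finally show "sin \<alpha> / (cosh (ln S - ln R) - cos \<alpha>) \<le> 2 * S * sin \<alpha> / (dist v w * sin \<alpha>0)"
    by (simp add: D_def)
qed
lemma sum_triangles:
  fixes c :: "real^2" and P Q :: "'i \<Rightarrow> real^2" and I :: "'i set"
  assumes fin: "finite I" and rho: "\<rho> \<ge> 0"
    and bnd: "\<And>i k. i \<in> I \<Longrightarrow> \<bar>P i $ k - c $ k\<bar> \<le> \<rho> \<and> \<bar>Q i $ k - c $ k\<bar> \<le> \<rho>"
    and disj: "\<And>i j. i \<in> I \<Longrightarrow> j \<in> I \<Longrightarrow> i \<noteq> j \<Longrightarrow>
        interior (convex hull {c, P i, Q i}) \<inter> interior (convex hull {c, P j, Q j}) = {}"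
  shows "(\<Sum>i\<in>I. measure lebesgue (convex hull {c, P i, Q i})) \<le> (2*\<rho>)^2"
proof -
  define T where "T i = convex hull {c, P i, Q i}" for i
  have cT: "compact (T i)" for i unfolding T_def by (intro finite_imp_compact_convex_hull) auto
  have lT: "T i \<in> lmeasurable" for i using cT lmeasurable_compact by blast
  have negl: "negligible (T i \<inter> T j)" if "i \<in> I" "j \<in> I" "i \<noteq> j" for i j
  proof -
    have "T i \<inter> T j \<subseteq> frontier (T i) \<union> frontier (T j)"
      using disj[OF that] cT compact_imp_closed unfolding T_def[symmetric]
      using closure_subset[of "T i"] closure_subset[of "T j"] by (auto simp: frontier_def)
    moreover have "negligible (frontier (T i))" "negligible (frontier (T j))"
      unfolding T_def by (auto intro!: negligible_convex_frontier convex_convex_hull)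
    ultimately show ?thesis using negligible_Un negligible_subset by metis
  qed
  have "(\<Sum>i\<in>I. measure lebesgue (T i)) = measure lebesgue (\<Union>(T ` I))"
    by (rule measure_negligible_finite_Union_image[symmetric])
       (use fin lT negl in \<open>auto simp: pairwise_def\<close>)
  also have "\<dots> \<le> measure lebesgue (cbox (c - vec \<rho>) (c + vec \<rho>))"
  proof (rule measure_mono_fmeasurable)
    show "\<Union>(T ` I) \<subseteq> cbox (c - vec \<rho>) (c + vec \<rho>)"
    proof (clarify)
      fix x i assume "i \<in> I" "x \<in> T i"
      have "{c, P i, Q i} \<subseteq> cbox (c - vec \<rho>) (c + vec \<rho>)"
        using bnd[OF \<open>i \<in> I\<close>] rho by (auto simp: mem_box_cart abs_le_iff algebra_simps)
      then have "T i \<subseteq> cbox (c - vec \<rho>) (c + vec \<rho>)"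
        unfolding T_def by (intro hull_minimal) (auto simp: convex_box)
      then show "x \<in> cbox (c - vec \<rho>) (c + vec \<rho>)" using \<open>x \<in> T i\<close> by blast
    qed
  qed (use fin lT in auto)
  also have "\<dots> = (2*\<rho>)^2"
  proof -
    have "c \<in> cbox (c - vec \<rho>) (c + vec \<rho>)" using rho by (simp add: mem_box_cart)
    then have ne: "cbox (c - vec \<rho>) (c + vec \<rho>) \<noteq> {}" by blast
    have "measure lebesgue (cbox (c - vec \<rho>) (c + vec \<rho>)) = measure lborel (cbox (c - vec \<rho>) (c + vec \<rho>))"
      by (simp add: measure_completion)
    also have "\<dots> = (2*\<rho>)^2" using ne by (simp add: content_cbox_cart)
    finally show ?thesis .
  qed
  finally show ?thesis unfolding T_def .
qed

definition phi :: "complex \<Rightarrow> real^2" where "phi z = vector [Re z, Im z]"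

lemma linear_phi: "linear phi"
  by (rule linearI) (auto simp: phi_def vec_eq_iff forall_2)

lemma bij_phi: "bij phi"
proof (rule bijI)
  show "inj phi" by (rule injI) (auto simp: phi_def vec_eq_iff forall_2 complex_eq_iff)
  show "surj phi"
  proof (rule surjI)
    fix x :: "real^2" show "phi (Complex (x$1) (x$2)) = x" by (auto simp: phi_def vec_eq_iff forall_2)
  qed
qed

lemma area_phi: "measure lebesgue (convex hull {phi a, phi b, phi c}) = \<bar>cross2 (b - a) (c - a)\<bar> / 2"
proof -
  have "measure lebesgue (convex hull {phi a, phi b, phi c}) = measure lborel (convex hull {phi a, phi b, phi c})"
    by (intro measure_completion) (auto intro!: borel_closed compact_imp_closed finite_imp_compact_convex_hull)
  also have "\<dots> = \<bar>cross2 (b - a) (c - a)\<bar> / 2"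
    unfolding content_triangle by (simp add: phi_def cross2_def abs_minus_commute algebra_simps)
  finally show ?thesis .
qed

lemma cross2_scaleR: "cross2 (s *\<^sub>R a) (t *\<^sub>R b) = s * t * cross2 a b"
  by (simp add: cross2_def algebra_simps)

lemma phi_coord: "\<bar>phi (a + u) $ k - phi a $ k\<bar> \<le> norm u"
  using exhaust_2[of k] abs_Re_le_cmod[of u] abs_Im_le_cmod[of u]
  by (auto simp: phi_def)

lemma convex_seg: "convex K \<Longrightarrow> x \<in> K \<Longrightarrow> y \<in> K \<Longrightarrow> 0 \<le> t \<Longrightarrow> t \<le> 1 \<Longrightarrow> x + t *\<^sub>R (y - x) \<in> K"
  using convexD[of K x y "1-t" t] by (simp add: algebra_simps)

theorem lemma5p11:
  fixes \<alpha>\<^sub>0 :: real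
  assumes "0 < \<alpha>\<^sub>0" and "\<alpha>\<^sub>0 \<le> pi / 2"
  shows "\<exists>C\<^sub>5. \<forall>F \<alpha> r z.
           b_quad_graph F \<longrightarrow> admissible F \<alpha> \<longrightarrow>
           (\<forall>f\<in>F. \<alpha>\<^sub>0 \<le> \<alpha> f \<and> \<alpha> f < pi) \<longrightarrow>
           circle_pattern F \<alpha> r z \<longrightarrow> embedded F z \<longrightarrow>
           (\<forall>v\<in>white_vertices F. interior_vertex F v \<longrightarrow>
              (\<Sum>f\<in>faces_at F v. conductance \<alpha> r f) \<le> C\<^sub>5)"
proof (intro exI[of _ "16 / sin \<alpha>\<^sub>0"] allI impI ballI)
  fix F \<alpha> r z v
  assume bq: "b_quad_graph F" and ab: "\<forall>f\<in>F. \<alpha>\<^sub>0 \<le> \<alpha> f \<and> \<alpha> f < pi"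
    and cp: "circle_pattern F \<alpha> r z" and emb: "embedded F z"
    and vw: "v \<in> white_vertices F" and iv: "interior_vertex F v"
  define Fv where "Fv = faces_at F v"
  obtain fs where fs: "distinct fs" "length fs \<ge> 3" "set fs = Fv"
    using iv unfolding interior_vertex_def Fv_def by blast
  have finFv: "finite Fv" using fs(3) by auto
  have neFv: "Fv \<noteq> {}" using fs by auto
  have wb: "white_vertices F \<inter> black_vertices F = {}" using bq by (simp add: b_quad_graph_def)
  have vf: "f \<in> F \<and> (fw1 f = v \<or> fw2 f = v)" if "f \<in> Fv" for f
  proof -
    have fF: "f \<in> F" and "v \<in> face_verts f" using that by (auto simp: Fv_def faces_at_def)
    moreover have "fb1 f \<in> black_vertices F" "fb2 f \<in> black_vertices F"
      using fF by (auto simp: black_vertices_def)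
    ultimately show ?thesis using vw wb by (auto simp: face_verts_def)
  qed
  have whites: "fw1 f \<in> white_vertices F" "fw2 f \<in> white_vertices F" if "f \<in> F" for f
    using that by (auto simp: white_vertices_def)
  have rpos: "\<And>u. u \<in> white_vertices F \<Longrightarrow> r u > 0" using cp by (simp add: circle_pattern_def)
  have facts: "\<And>f. f \<in> F \<Longrightarrow>
        dist (z (fb1 f)) (z (fw1 f)) = r (fw1 f) \<and> dist (z (fb1 f)) (z (fw2 f)) = r (fw2 f) \<and>
        angle_at (z (fb1 f)) (z (fw1 f)) (z (fw2 f)) = \<alpha> f"
    using cp by (simp add: circle_pattern_def)
  define oth where "oth f = (if fw1 f = v then fw2 f else fw1 f)" for f
  define R where "R = r v"
  define S where "S f = r (oth f)" for f
  define D where "D f = dist (z v) (z (oth f))" for f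
  define b where "b f = z (fb1 f)" for f
  have Rpos: "R > 0" using rpos vw by (simp add: R_def)
  have sa0: "sin \<alpha>\<^sub>0 > 0" using assms by (intro sin_gt_zero) auto
  have key: "D f > 0 \<and> \<bar>cross2 (b f - z v) (z (oth f) - z v)\<bar> = R * S f * sin (\<alpha> f) \<and>
      conductance \<alpha> r f \<le> 2 * S f * sin (\<alpha> f) / (D f * sin \<alpha>\<^sub>0) \<and>
      dist (b f) (z v) = R \<and> sin (\<alpha> f) \<ge> 0 \<and> S f > 0"
    if "f \<in> Fv" for f
  proof -
    have fF: "f \<in> F" and vv: "fw1 f = v \<or> fw2 f = v" using vf[OF that] by auto
    have Sp: "S f > 0" using rpos whites[OF fF] by (auto simp: S_def oth_def)
    have fa: "dist (b f) (z v) = R" "dist (b f) (z (oth f)) = S f"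
      "arccos (inner (z v - b f) (z (oth f) - b f) / (norm (z v - b f) * norm (z (oth f) - b f))) = \<alpha> f"
      using facts[OF fF] vv
      by (auto simp: b_def R_def S_def oth_def angle_at_def inner_commute mult.commute)
    have abf: "\<alpha>\<^sub>0 \<le> \<alpha> f" "\<alpha> f < pi" using ab fF by auto
    note fb = face_bound[OF assms fa(1) Rpos fa(2) Sp fa(3) abf]
    have sa: "sin (\<alpha> f) \<ge> 0" using abf assms by (intro sin_ge_zero) auto
    have "conductance \<alpha> r f = sin (\<alpha> f) / (cosh (ln (S f) - ln R) - cos (\<alpha> f))"
    proof (cases "fw1 f = v")
      case True then show ?thesis by (simp add: conductance_def S_def R_def oth_def)
    next
      case False
      then have "fw2 f = v" using vv by auto
      then have "ln (r (fw2 f)) - ln (r (fw1 f)) = - (ln (S f) - ln R)"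
        using False by (simp add: S_def R_def oth_def)
      then show ?thesis by (simp only: conductance_def cosh_minus)
    qed
    then show ?thesis using fb fa sa Sp by (simp add: D_def)
  qed
  define \<rho> where "\<rho> = Min (insert R (D ` Fv))"
  have rhopos: "\<rho> > 0" using finFv key Rpos unfolding \<rho>_def by (auto simp: Min_gr_iff)
  have rhoR: "\<rho> \<le> R" using finFv unfolding \<rho>_def by simp
  have rhoD: "\<rho> \<le> D f" if "f \<in> Fv" for f using finFv that unfolding \<rho>_def by simp
  define q1 where "q1 f = z v + (\<rho> / R) *\<^sub>R (b f - z v)" for f
  define q2 where "q2 f = z v + (\<rho> / D f) *\<^sub>R (z (oth f) - z v)" for f
  define H where "H f = convex hull {z v, q1 f, q2 f}" for f
  have area: "measure lebesgue (convex hull {phi (z v), phi (q1 f), phi (q2 f)})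
      = \<rho>^2 * S f * sin (\<alpha> f) / (2 * D f)" if "f \<in> Fv" for f
  proof -
    have "measure lebesgue (convex hull {phi (z v), phi (q1 f), phi (q2 f)})
        = \<bar>cross2 ((\<rho> / R) *\<^sub>R (b f - z v)) ((\<rho> / D f) *\<^sub>R (z (oth f) - z v))\<bar> / 2"
      unfolding area_phi q1_def q2_def by simp
    also have "\<dots> = (\<rho> / R) * (\<rho> / D f) * (R * S f * sin (\<alpha> f)) / 2"
      using key[OF that] rhopos Rpos by (simp add: cross2_scaleR abs_mult)
    also have "\<dots> = \<rho>^2 * S f * sin (\<alpha> f) / (2 * D f)"
      using Rpos by (simp add: power2_eq_square field_simps)
    finally show ?thesis .
  qed
  have cond: "conductance \<alpha> r f \<le> (4 / (\<rho>^2 * sin \<alpha>\<^sub>0)) *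
      measure lebesgue (convex hull {phi (z v), phi (q1 f), phi (q2 f)})" if "f \<in> Fv" for f
  proof -
    have "(4 / (\<rho>^2 * sin \<alpha>\<^sub>0)) * (\<rho>^2 * S f * sin (\<alpha> f) / (2 * D f))
        = 2 * S f * sin (\<alpha> f) / (D f * sin \<alpha>\<^sub>0)"
      using rhopos sa0 key[OF that] by (simp add: field_simps power2_eq_square)
    then show ?thesis using key[OF that] area[OF that] by simp
  qed
  have Hsub: "H f \<subseteq> kite z f" if "f \<in> Fv" for f
  proof -
    define K where "K = convex hull {z (fw1 f), z (fb1 f), z (fw2 f)}"
    have cK: "convex K" unfolding K_def by simp
    have vvK: "z v \<in> K" "b f \<in> K" "z (oth f) \<in> K"
      using vf[OF that] unfolding K_def b_def oth_def by (auto intro: hull_inc)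
    have "q1 f \<in> K" unfolding q1_def
      using convex_seg[OF cK vvK(1) vvK(2)] rhoR rhopos Rpos by simp
    moreover have "q2 f \<in> K" unfolding q2_def
      using convex_seg[OF cK vvK(1) vvK(3)] rhoD[OF that] rhopos key[OF that] by simp
    ultimately have "H f \<subseteq> K" unfolding H_def using vvK cK by (intro hull_minimal) auto
    then show ?thesis unfolding kite_def K_def by blast
  qed
  have hullphi: "convex hull {phi (z v), phi (q1 f), phi (q2 f)} = phi ` H f" for f
    unfolding H_def by (simp add: convex_hull_linear_image[OF linear_phi])
  have intphi: "interior (phi ` A) = phi ` interior A" for A
    by (rule interior_bijective_linear_image[OF linear_phi bij_phi])
  have sumle: "(\<Sum>f\<in>Fv. measure lebesgue (convex hull {phi (z v), phi (q1 f), phi (q2 f)})) \<le> (2*\<rho>)^2"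
  proof (rule sum_triangles[OF finFv])
    show "0 \<le> \<rho>" using rhopos by simp
    fix f k assume f: "f \<in> Fv"
    have n1: "norm ((\<rho> / R) *\<^sub>R (b f - z v)) = \<rho>"
      using key[OF f] rhopos Rpos by (simp add: dist_norm)
    have n2: "norm ((\<rho> / D f) *\<^sub>R (z (oth f) - z v)) = \<rho>"
      using key[OF f] rhopos by (simp add: D_def dist_norm norm_minus_commute)
    show "\<bar>phi (q1 f) $ k - phi (z v) $ k\<bar> \<le> \<rho> \<and> \<bar>phi (q2 f) $ k - phi (z v) $ k\<bar> \<le> \<rho>"
      unfolding q1_def q2_def
      using phi_coord[of "z v" "(\<rho> / R) *\<^sub>R (b f - z v)" k] phi_coord[of "z v" "(\<rho> / D f) *\<^sub>R (z (oth f) - z v)" k] n1 n2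
      by simp
  next
    fix f g assume f: "f \<in> Fv" and g: "g \<in> Fv" and fg: "f \<noteq> g"
    have "interior (kite z f) \<inter> interior (kite z g) = {}"
      using emb vf[OF f] vf[OF g] fg by (simp add: embedded_def)
    then have "interior (H f) \<inter> interior (H g) = {}"
      using interior_mono[OF Hsub[OF f]] interior_mono[OF Hsub[OF g]] by blast
    then have "phi ` interior (H f) \<inter> phi ` interior (H g) = {}"
      using bij_is_inj[OF bij_phi] by (simp add: image_Int[symmetric])
    then show "interior (convex hull {phi (z v), phi (q1 f), phi (q2 f)}) \<inter>
               interior (convex hull {phi (z v), phi (q1 g), phi (q2 g)}) = {}"
      unfolding hullphi intphi .
  qed
  have "(\<Sum>f\<in>faces_at F v. conductance \<alpha> r f)
      \<le> (\<Sum>f\<in>Fv. (4 / (\<rho>^2 * sin \<alpha>\<^sub>0)) * measure lebesgue (convex hull {phi (z v), phi (q1 f), phi (q2 f)}))"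
    unfolding Fv_def[symmetric] by (rule sum_mono) (rule cond)
  also have "\<dots> = (4 / (\<rho>^2 * sin \<alpha>\<^sub>0)) * (\<Sum>f\<in>Fv. measure lebesgue (convex hull {phi (z v), phi (q1 f), phi (q2 f)}))"
    by (simp add: sum_distrib_left)
  also have "\<dots> \<le> (4 / (\<rho>^2 * sin \<alpha>\<^sub>0)) * (2*\<rho>)^2"
    using sumle rhopos sa0 by (intro mult_left_mono) auto
  also have "\<dots> = 16 / sin \<alpha>\<^sub>0" using rhopos by (simp add: field_simps power2_eq_square)
  finally show "(\<Sum>f\<in>faces_at F v. conductance \<alpha> r f) \<le> 16 / sin \<alpha>\<^sub>0" .
qed
end
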